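(* Let $\mathcal{F}=(W,\preceq,\mathcal{V})$ be a finite poset model and $B\subseteq W\times W$ a weak $\pm$-bisimulation. For all $w_1,w_2$ with $B(w_1,w_2)$ and every $\uparrow\!\downarrow$-path $\pi_1:[0;2h]\to W$ from $w_1$, there is a $\downarrow$-path $\pi_2:[0;k]\to W$ from $w_2$ such that $B(\pi_1(2h),\pi_2(k))$ and for each $j\in[0;k)$ there is $i\in[0;2h)$ with $B(\pi_1(i),\pi_2(j))$.
   Context: Fix a set PL of proposition letters. A poset model is $\mathcal{F}=(W,\preceq,\mathcal{V})$ with $(W,\preceq)$ a partial order and $\mathcal{V}:\mathrm{PL}\to\mathcal{P}(W)$. $[m;n]=\{i\in\mathbb{N}:m\le i\le n\}$, $[m;n)=\{i:m\le i<n\}$. An undirected path of length $\ell$ from $w$ is $\pi:[0;\ell]\to W$ with $\pi(0)=w$ and, for each $i\in[0;\ell)$, $\pi(i)\preceq\pi(i+1)$ or $\pi(i+1)\preceq\pi(i)$. A $\downarrow$-path is an undirected path of length $\ell\ge1$ with $\pi(\ell)\preceq\pi(\ell-1)$. A $\pm$-path is a $\downarrow$-path of length $\ell\ge2$ with $\pi(0)\preceq\pi(1)$. An $\uparrow\!\downarrow$-path of length $2h$ ($h\ge1$) satisfies $\pi(2i)\preceq\pi(2i+1)\succeq\pi(2i+2)$ for all $i\in[0;h)$. A weak $\pm$-bisimulation is a symmetric relation $B\subseteq W\times W$ such that whenever $B(w_1,w_2)$: (1) for every $p\in\mathrm{PL}$, $w_1\in\mathcal{V}(p)$ iff $w_2\in\mathcal{V}(p)$;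 (2) for all $u_1,d_1\in W$ with ($w_1\preceq u_1$ or $u_1\preceq w_1$) and $d_1\preceq u_1$, there is a $\pm$-path $\pi_2:[0;\ell_2]\to W$ from $w_2$ with $B(d_1,\pi_2(\ell_2))$ and, for all $j\in[0;\ell_2)$, $B(w_1,\pi_2(j))$ or $B(u_1,\pi_2(j))$. *)

theory Defs
  imports Main
begin

definition poset_model :: "'w set \<Rightarrow> ('w \<Rightarrow> 'w \<Rightarrow> bool) \<Rightarrow> ('p \<Rightarrow> 'w set) \<Rightarrow> bool" where
  "poset_model W le V \<longleftrightarrow>
     (\<forall>x\<in>W. le x x) \<and>
     (\<forall>x\<in>W. \<forall>y\<in>W. le x y \<and> le y x \<longrightarrow> x = y) \<and>
     (\<forall>x\<in>W. \<forall>y\<in>W. \<forall>z\<in>W. le x y \<and> le y z \<longrightarrow> le x z) \<and>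
     (\<forall>p. V p \<subseteq> W)"

definition undirected_path :: "'w set \<Rightarrow> ('w \<Rightarrow> 'w \<Rightarrow> bool) \<Rightarrow> (nat \<Rightarrow> 'w) \<Rightarrow> nat \<Rightarrow> 'w \<Rightarrow> bool" where
  "undirected_path W le \<pi> l w \<longleftrightarrow>
     \<pi> 0 = w \<and> (\<forall>i\<le>l. \<pi> i \<in> W) \<and>
     (\<forall>i<l. le (\<pi> i) (\<pi> (Suc i)) \<or> le (\<pi> (Suc i)) (\<pi> i))"

definition down_path :: "'w set \<Rightarrow> ('w \<Rightarrow> 'w \<Rightarrow> bool) \<Rightarrow> (nat \<Rightarrow> 'w) \<Rightarrow> nat \<Rightarrow> 'w \<Rightarrow> bool" where
  "down_path W le \<pi> l w \<longleftrightarrow>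
     undirected_path W le \<pi> l w \<and> 1 \<le> l \<and> le (\<pi> l) (\<pi> (l - 1))"

definition pm_path :: "'w set \<Rightarrow> ('w \<Rightarrow> 'w \<Rightarrow> bool) \<Rightarrow> (nat \<Rightarrow> 'w) \<Rightarrow> nat \<Rightarrow> 'w \<Rightarrow> bool" where
  "pm_path W le \<pi> l w \<longleftrightarrow>
     down_path W le \<pi> l w \<and> 2 \<le> l \<and> le (\<pi> 0) (\<pi> 1)"

definition updown_path :: "'w set \<Rightarrow> ('w \<Rightarrow> 'w \<Rightarrow> bool) \<Rightarrow> (nat \<Rightarrow> 'w) \<Rightarrow> nat \<Rightarrow> 'w \<Rightarrow> bool" where
  "updown_path W le \<pi> h w \<longleftrightarrow>
     1 \<le> h \<and> \<pi> 0 = w \<and> (\<forall>i\<le>2*h. \<pi> i \<in> W) \<and>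
     (\<forall>i<h. le (\<pi> (2*i)) (\<pi> (2*i+1)) \<and> le (\<pi> (2*i+2)) (\<pi> (2*i+1)))"

definition weak_pm_bisim :: "'w set \<Rightarrow> ('w \<Rightarrow> 'w \<Rightarrow> bool) \<Rightarrow> ('p \<Rightarrow> 'w set) \<Rightarrow> ('w \<times> 'w) set \<Rightarrow> bool" where
  "weak_pm_bisim W le V B \<longleftrightarrow>
     B \<subseteq> W \<times> W \<and> sym B \<and>
     (\<forall>w1 w2. (w1, w2) \<in> B \<longrightarrow>
        (\<forall>p. w1 \<in> V p \<longleftrightarrow> w2 \<in> V p) \<and>
        (\<forall>u1\<in>W. \<forall>d1\<in>W. (le w1 u1 \<or> le u1 w1) \<and> le d1 u1 \<longrightarrow>
           (\<exists>\<pi>2 l2. pm_path W le \<pi>2 l2 w2 \<and> (d1, \<pi>2 l2) \<in> B \<and>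
              (\<forall>j<l2. (w1, \<pi>2 j) \<in> B \<or> (u1, \<pi>2 j) \<in> B))))"

end

theory Submission
  imports Defs
begin

lemma aux:
  assumes bis: "weak_pm_bisim W le V B"
  shows "\<And>\<pi>1 w1 w2. (w1, w2) \<in> B \<Longrightarrow> updown_path W le \<pi>1 h w1 \<Longrightarrow>
    \<exists>\<pi>2 k. down_path W le \<pi>2 k w2 \<and> (\<pi>1 (2*h), \<pi>2 k) \<in> B \<and>
           (\<forall>j<k. \<exists>i<2*h. (\<pi>1 i, \<pi>2 j) \<in> B)"
proof (induction h)
  case 0
  then show ?case by (simp add: updown_path_def)
next
  case (Suc h)
  note up = Suc.prems(2)
  have W: "\<pi>1 1 \<in> W" "\<pi>1 2 \<in> W" using up unfolding updown_path_def
    by (auto dest: spec[of _ 1] spec[of _ 2])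
  have lw: "le (\<pi>1 0) (\<pi>1 1)" "le (\<pi>1 2) (\<pi>1 1)"
    using up unfolding updown_path_def by (auto dest!: spec[of _ 0] simp: numeral_2_eq_2)
  have w10: "\<pi>1 0 = w1" using up unfolding updown_path_def by simp
  obtain \<sigma> l where pm: "pm_path W le \<sigma> l w2" and sB: "(\<pi>1 2, \<sigma> l) \<in> B"
    and sj: "\<forall>j<l. (w1, \<sigma> j) \<in> B \<or> (\<pi>1 1, \<sigma> j) \<in> B"
    using bis Suc.prems(1) W lw w10 unfolding weak_pm_bisim_def by blast
  have dp: "down_path W le \<sigma> l w2" using pm unfolding pm_path_def by simp
  show ?case
  proof (cases h)
    case 0
    show ?thesis
      apply (rule exI[of _ \<sigma>], rule exI[of _ l])
      using dp sB sj w10 0 by (auto simp: numeral_2_eq_2 less_Suc_eq)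
  next
    case (Suc m)
    define \<pi>1' where "\<pi>1' = (\<lambda>i. \<pi>1 (i+2))"
    have up': "updown_path W le \<pi>1' h (\<pi>1 2)"
      using up Suc unfolding updown_path_def \<pi>1'_def
    proof (intro conjI allI impI)
      fix i assume a: "1 \<le> Suc h \<and> \<pi>1 0 = w1 \<and> (\<forall>i\<le>2 * Suc h. \<pi>1 i \<in> W) \<and>
        (\<forall>i<Suc h. le (\<pi>1 (2 * i)) (\<pi>1 (2 * i + 1)) \<and> le (\<pi>1 (2 * i + 2)) (\<pi>1 (2 * i + 1)))"
      { assume "i \<le> 2*h" thus "\<pi>1 (i+2) \<in> W" using a by auto }
      { assume "i < h"
        hence "Suc i < Suc h" by simp
        hence "le (\<pi>1 (2 * Suc i)) (\<pi>1 (2 * Suc i + 1)) \<and> le (\<pi>1 (2 * Suc i + 2)) (\<pi>1 (2 * Suc i + 1))"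
          using a by blast
        thus "le (\<pi>1 (2 * i + 2)) (\<pi>1 (2 * i + 1 + 2))" "le (\<pi>1 (2 * i + 2 + 2)) (\<pi>1 (2 * i + 1 + 2))"
          by (simp_all add: algebra_simps) }
    qed (auto simp: Suc, simp add: numeral_2_eq_2)
    obtain \<tau> k where td: "down_path W le \<tau> k (\<sigma> l)" and tB: "(\<pi>1' (2*h), \<tau> k) \<in> B"
      and tj: "\<forall>j<k. \<exists>i<2*h. (\<pi>1' i, \<tau> j) \<in> B"
      using Suc.IH[OF sB up'] by blast
    define \<rho> where "\<rho> = (\<lambda>i. if i \<le> l then \<sigma> i else \<tau> (i - l))"
    have k1: "1 \<le> k" and t0: "\<tau> 0 = \<sigma> l" using td unfolding down_path_def undirected_path_def by auto
    have l1: "1 \<le> l" using dp unfolding down_path_def by simp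
    have rho_hi: "\<And>i. l \<le> i \<Longrightarrow> \<rho> i = \<tau> (i - l)" using t0 unfolding \<rho>_def by auto
    have "down_path W le \<rho> (l+k) w2"
      unfolding down_path_def undirected_path_def
    proof (intro conjI allI impI)
      show "\<rho> 0 = w2" using dp unfolding \<rho>_def down_path_def undirected_path_def by simp
      show "1 \<le> l + k" using k1 by simp
      fix i
      { assume "i \<le> l + k" thus "\<rho> i \<in> W"
        proof (cases "i \<le> l")
          case True thus ?thesis using dp unfolding \<rho>_def down_path_def undirected_path_def by simp
        next
          case False thus ?thesis using td \<open>i \<le> l+k\<close> unfolding \<rho>_def down_path_def undirected_path_def by simp
        qed }
      { assume il: "i < l + k"
        show "le (\<rho> i) (\<rho> (Suc i)) \<or> le (\<rho> (Suc i)) (\<rho> i)"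
        proof (cases "i < l")
          case True thus ?thesis using dp unfolding \<rho>_def down_path_def undirected_path_def by simp
        next
          case False
          hence "\<rho> i = \<tau> (i-l)" "\<rho> (Suc i) = \<tau> (Suc (i-l))" using rho_hi by (auto simp: Suc_diff_le)
          moreover have "i - l < k" using il False by simp
          ultimately show ?thesis using td unfolding down_path_def undirected_path_def by simp
        qed }
    next
      have "\<rho> (l+k) = \<tau> k" "\<rho> (l+k-1) = \<tau> (k-1)" using rho_hi k1 by auto
      thus "le (\<rho> (l + k)) (\<rho> (l + k - 1))" using td unfolding down_path_def by simp
    qed
    moreover have "(\<pi>1 (2 * Suc h), \<rho> (l+k)) \<in> B"
      using tB rho_hi unfolding \<pi>1'_def by (simp add: algebra_simps)
    moreover have "\<forall>j<l+k. \<exists>i<2 * Suc h. (\<pi>1 i, \<rho> j) \<in> B"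
    proof (intro allI impI)
      fix j assume jl: "j < l + k"
      show "\<exists>i<2 * Suc h. (\<pi>1 i, \<rho> j) \<in> B"
      proof (cases "j < l")
        case True
        hence "(\<pi>1 0, \<rho> j) \<in> B \<or> (\<pi>1 1, \<rho> j) \<in> B" using sj w10 unfolding \<rho>_def by simp
        thus ?thesis
        proof
          assume "(\<pi>1 0, \<rho> j) \<in> B" thus ?thesis by (intro exI[of _ 0]) simp
        next
          assume "(\<pi>1 1, \<rho> j) \<in> B" thus ?thesis by (intro exI[of _ 1]) simp
        qed
      next
        case False
        hence "j - l < k" "\<rho> j = \<tau> (j - l)" using jl rho_hi by auto
        then obtain i where "i < 2*h" "(\<pi>1 (i+2), \<rho> j) \<in> B" using tj unfolding \<pi>1'_def by auto
        thus ?thesis by (intro exI[of _ "i+2"]) auto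
      qed
    qed
    ultimately show ?thesis by blast
  qed
qed

theorem lemma7:
  fixes W :: "'w set" and le :: "'w \<Rightarrow> 'w \<Rightarrow> bool" and V :: "'p \<Rightarrow> 'w set"
    and B :: "('w \<times> 'w) set"
  assumes "poset_model W le V" and "finite W"
    and "weak_pm_bisim W le V B"
    and "(w1, w2) \<in> B"
    and "updown_path W le \<pi>1 h w1"
  shows "\<exists>\<pi>2 k. down_path W le \<pi>2 k w2 \<and> (\<pi>1 (2*h), \<pi>2 k) \<in> B \<and>
           (\<forall>j<k. \<exists>i<2*h. (\<pi>1 i, \<pi>2 j) \<in> B)"
  using aux[OF assms(3) assms(4) assms(5)] .

end
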